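(* For every integer $k \geq 1$, let $\mathcal{Q}(k)$ denote the greatest common divisor of all the sums $\sum_{i=1}^{k} Q_{n+i}$, $n \geq 0$. Then $$\mathcal{Q}(k) = \begin{cases} 2P_{k/2}, & \text{if } k \equiv 0 \pmod 4;\\ 2Q_{k/2}, & \text{if } k \equiv 2 \pmod 4;\\ 1, & \text{if } k \equiv 1,3 \pmod 4.\end{cases}$$
   Context: The Pell sequence $(P_n)_{n\ge0}$ is defined by $P_0=0$, $P_1=1$, $P_n = 2P_{n-1}+P_{n-2}$. The associated Pell sequence $(Q_n)_{n\ge0}$ is defined by $Q_0=1$, $Q_1=1$, $Q_n=2Q_{n-1}+Q_{n-2}$. *)

theory Defs
  imports Main
begin

fun pell :: "nat \<Rightarrow> nat" where
  "pell 0 = 0"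
| "pell (Suc 0) = 1"
| "pell (Suc (Suc n)) = 2 * pell (Suc n) + pell n"

fun assoc_pell :: "nat \<Rightarrow> nat" where
  "assoc_pell 0 = 1"
| "assoc_pell (Suc 0) = 1"
| "assoc_pell (Suc (Suc n)) = 2 * assoc_pell (Suc n) + assoc_pell n"

definition QQ :: "nat \<Rightarrow> nat" where
  "QQ k = Gcd {(\<Sum>i=1..k. assoc_pell (n + i)) | n. True}"

end

theory Submission
  imports Defs
begin

lemma QP: "assoc_pell n + pell n = pell (Suc n)"
  by (induction n rule: pell.induct) auto

lemma cassini: "int (pell (Suc n))^2 - 2 * int (pell n) * int (pell (Suc n)) - int (pell n)^2 = (-1)^n"
proof (induction n)
  case 0 then show ?case by simp
next
  case (Suc n)
  have "int (pell (Suc (Suc n))) = 2 * int (pell (Suc n)) + int (pell n)" by simp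
  then show ?case using Suc by (simp add: algebra_simps power2_eq_square)
qed

lemma pell_rec: "pell (n+2) = 2 * pell (n+1) + pell n"
  by (simp add: numeral_eq_Suc)

lemma dbl: "pell (2*j+1) = pell (j+1)^2 + pell j^2 \<and> pell (2*j+2) = 2*pell (j+1)^2 + 2*pell (j+1)*pell j"
proof (induction j)
  case 0 then show ?case by (simp add: numeral_eq_Suc)
next
  case (Suc j)
  define x where "x = pell (2*j+1)"
  define y where "y = pell (2*j+2)"
  define a where "a = pell (j+1)"
  define b where "b = pell j"
  have IH: "x = a^2 + b^2" "y = 2*a^2 + 2*a*b" using Suc unfolding x_def y_def a_def b_def by auto
  have c: "pell (Suc j + 1) = 2*a + b" unfolding a_def b_def using pell_rec[of j] by simp
  have p3: "pell (2 * Suc j + 1) = 2*y + x" unfolding x_def y_def using pell_rec[of "2*j+1"]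
    by (simp add: algebra_simps)
  have p4: "pell (2 * Suc j + 2) = 2*(2*y+x) + y" using pell_rec[of "2*j+2"] p3 unfolding y_def
    by (simp add: algebra_simps)
  have p5: "pell (Suc j) = a" unfolding a_def by simp
  show ?case unfolding p3 p4 c p5 IH by (simp add: algebra_simps power2_eq_square)
qed

lemma cop_pell: "coprime (pell n) (pell (Suc n))"
proof (induction n)
  case 0 then show ?case by simp
next
  case (Suc n)
  have "gcd (pell (Suc n)) (pell (Suc (Suc n))) = gcd (pell (Suc n)) (pell n)"
    by (simp only: pell.simps(3) gcd_add_mult)
  then show ?case using Suc by (simp add: coprime_iff_gcd_eq_1 gcd.commute)
qed

lemma cop_q: "coprime (assoc_pell n) (assoc_pell (Suc n))"
proof (induction n)
  case 0 then show ?case by simp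
next
  case (Suc n)
  have "gcd (assoc_pell (Suc n)) (assoc_pell (Suc (Suc n))) = gcd (assoc_pell (Suc n)) (assoc_pell n)"
    by (simp only: assoc_pell.simps(3) gcd_add_mult)
  then show ?case using Suc by (simp add: coprime_iff_gcd_eq_1 gcd.commute)
qed

lemma par: "odd (pell n) \<longleftrightarrow> odd n"
  by (induction n rule: pell.induct) auto

lemma sumQ: "(\<Sum>i=1..k. assoc_pell (n + i)) + pell (n+1) = pell (n+k+1)"
proof (induction k)
  case 0 then show ?case by simp
next
  case (Suc k)
  have "(\<Sum>i=1..Suc k. assoc_pell (n + i)) = (\<Sum>i=1..k. assoc_pell (n + i)) + assoc_pell (n + Suc k)"
    by simp
  then show ?case using Suc QP[of "n + Suc k"] by simp
qed

lemma Gcd_rec: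
  fixes S :: "nat \<Rightarrow> nat"
  assumes "\<And>n. S (Suc (Suc n)) = 2 * S (Suc n) + S n"
  shows "Gcd {S n | n. True} = gcd (S 0) (S 1)"
proof (rule dvd_antisym)
  show "Gcd {S n | n. True} dvd gcd (S 0) (S 1)"
    by (intro gcd_greatest Gcd_dvd) auto
  have "gcd (S 0) (S 1) dvd S n \<and> gcd (S 0) (S 1) dvd S (Suc n)" for n
  proof (induction n)
    case 0 then show ?case by simp
  next
    case (Suc n) then show ?case by (simp add: assms)
  qed
  then show "gcd (S 0) (S 1) dvd Gcd {S n | n. True}"
    by (intro Gcd_greatest) auto
qed

theorem theorem16:
  fixes k :: nat
  assumes "k \<ge> 1"
  shows "QQ k = (if k mod 4 = 0 then 2 * pell (k div 2)
                 else if k mod 4 = 2 then 2 * assoc_pell (k div 2)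
                 else 1)"
proof -
  define S where "S n = (\<Sum>i=1..k. assoc_pell (n + i))" for n
  have Sn: "S n + pell (n+1) = pell (n+k+1)" for n unfolding S_def by (rule sumQ)
  have rec: "S (Suc (Suc n)) = 2 * S (Suc n) + S n" for n
    unfolding S_def by (simp add: sum_distrib_left sum.distrib[symmetric])
  have "QQ k = gcd (S 0) (S 1)"
    unfolding QQ_def using Gcd_rec[of S, OF rec] unfolding S_def by simp
  also have "S 1 = 2 * S 0 + pell k"
  proof -
    have a: "S 0 + pell 1 = pell (k+1)" using Sn[of 0] by simp
    have b: "S 1 + pell 2 = pell (Suc (Suc k))" using Sn[of 1] by (simp add: numeral_eq_Suc)
    have "pell 2 = 2" by (simp add: numeral_eq_Suc)
    then show ?thesis using a b by simp
  qed
  also have "gcd (S 0) (2 * S 0 + pell k) = gcd (S 0) (pell k)"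
    by (rule gcd_add_mult)
  finally have QQ: "QQ k = gcd (S 0) (pell k)" .
  have S0: "S 0 + 1 = pell (k+1)" using Sn[of 0] by simp
  show ?thesis
  proof (cases "even k")
    case True
    then obtain j where kj: "k = 2*j" by blast
    have cj: "int (pell (Suc j))^2 - 2 * int (pell j) * int (pell (Suc j)) - int (pell j)^2 = (-1)^j"
      by (rule cassini)
    have Pk: "pell k = 2 * pell j * assoc_pell j"
    proof (cases j)
      case 0 then show ?thesis using kj by simp
    next
      case (Suc i)
      have "pell k = 2*pell (Suc i)^2 + 2*pell (Suc i)*pell i" using conjunct2[OF dbl[of i]] kj Suc
        by (simp del: pell.simps)
      moreover have "assoc_pell (Suc i) + pell (Suc i) = pell (Suc (Suc i))" by (rule QP)
      ultimately show ?thesis using Suc by (simp add: algebra_simps power2_eq_square)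
    qed
    have P1: "pell (k+1) = pell (Suc j)^2 + pell j^2" using conjunct1[OF dbl[of j]] kj by (simp del: pell.simps)
    have Q1: "assoc_pell (Suc j) + pell (Suc j) = pell (Suc (Suc j))" by (rule QP)
    have Q0: "assoc_pell j + pell j = pell (Suc j)" by (rule QP)
    show ?thesis
    proof (cases "even j")
      case True
      have "int (S 0) = 2 * int (pell j) * int (assoc_pell (Suc j))"
      proof -
        have h: "S 0 + 1 = pell (Suc j)^2 + pell j^2" using S0 P1 by simp
        have "int (S 0 + 1) = int (pell (Suc j)^2 + pell j^2)" by (simp only: h)
        hence "int (S 0) + 1 = int (pell (Suc j))^2 + int (pell j)^2" by simp
        moreover have "int (assoc_pell (Suc j)) = int (pell (Suc j)) + int (pell j)" using Q1 by simp
        moreover have "int (pell (Suc j))^2 - 2 * int (pell j) * int (pell (Suc j)) - int (pell j)^2 = 1"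
          using cj True by simp
        ultimately show ?thesis by (simp add: algebra_simps power2_eq_square)
      qed
      hence "int (S 0) = int (2 * pell j * assoc_pell (Suc j))" by simp
      hence "S 0 = 2 * pell j * assoc_pell (Suc j)" by (simp only: of_nat_eq_iff)
      hence "gcd (S 0) (pell k) = 2 * pell j * gcd (assoc_pell (Suc j)) (assoc_pell j)"
        using Pk by (simp only: gcd_mult_distrib_nat)
      also have "gcd (assoc_pell (Suc j)) (assoc_pell j) = 1"
        using cop_q[of j] by (simp add: coprime_iff_gcd_eq_1 gcd.commute)
      finally have "QQ k = 2 * pell j" using QQ by simp
      moreover have "k mod 4 = 0" using kj True by auto
      ultimately show ?thesis using kj by simp
    next
      case False
      have "int (S 0) = 2 * int (assoc_pell j) * int (pell (Suc j))"
      proof -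
        have h: "S 0 + 1 = pell (Suc j)^2 + pell j^2" using S0 P1 by simp
        have "int (S 0 + 1) = int (pell (Suc j)^2 + pell j^2)" by (simp only: h)
        hence "int (S 0) + 1 = int (pell (Suc j))^2 + int (pell j)^2" by simp
        moreover have "int (assoc_pell j) = int (pell (Suc j)) - int (pell j)" using Q0 by simp
        moreover have "int (pell (Suc j))^2 - 2 * int (pell j) * int (pell (Suc j)) - int (pell j)^2 = -1"
          using cj False by simp
        ultimately show ?thesis by algebra
      qed
      hence "int (S 0) = int (2 * assoc_pell j * pell (Suc j))" by simp
      hence "S 0 = 2 * assoc_pell j * pell (Suc j)" by (simp only: of_nat_eq_iff)
      moreover have "pell k = (2 * assoc_pell j) * pell j" using Pk by (simp add: ac_simps)
      ultimately have "gcd (S 0) (pell k) = 2 * assoc_pell j * gcd (pell (Suc j)) (pell j)"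
        by (simp only: gcd_mult_distrib_nat)
      also have "gcd (pell (Suc j)) (pell j) = 1"
        using cop_pell[of j] by (simp add: coprime_iff_gcd_eq_1 gcd.commute)
      finally have "QQ k = 2 * assoc_pell j" using QQ by simp
      moreover have "k mod 4 = 2" using kj False by presburger
      ultimately show ?thesis using kj by simp
    qed
  next
    case False
    obtain j where kj1: "k = Suc j" using assms by (cases k) auto
    have kj: "k = Suc j" "even j" using kj1 False by auto
    define g where "g = gcd (S 0) (pell k)"
    have c: "int (pell k)^2 - 2 * int (pell j) * int (pell k) - int (pell j)^2 = 1"
      using cassini[of j] kj by simp
    have rk: "int (S 0) + 1 = 2 * int (pell k) + int (pell j)"
      using S0 kj by simp
    obtain u where u: "pell k = g * u" unfolding g_def by (meson gcd_dvd2 dvdE)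
    obtain v where v: "S 0 = g * v" unfolding g_def by (meson gcd_dvd1 dvdE)
    have "int (pell j) = int g * (int v - 2 * int u) + 1" using rk u v by (simp add: algebra_simps)
    hence "(int g * int u)^2 - 2 * (int g * (int v - 2 * int u) + 1) * (int g * int u)
           - (int g * (int v - 2 * int u) + 1)^2 = 1"
      using c u by simp
    hence "2 = int g * ((int g * int u ^ 2 - 2 * int u - 2 * int g * int u * (int v - 2 * int u)
             - 2 * (int v - 2 * int u) - int g * (int v - 2 * int u)^2))"
      by algebra
    hence "int g dvd 2" by (metis dvdI)
    hence g2: "g dvd 2" by (metis of_nat_dvd_iff of_nat_numeral)
    have "odd (pell k)" using par False by simp
    hence "odd g" using u by auto
    moreover have "g \<le> 2" using g2 by (rule dvd_imp_le) simp
    ultimately have "g = 1" by presburger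
    hence q1: "QQ k = 1" using QQ unfolding g_def by simp
    have "k mod 4 \<noteq> 0" "k mod 4 \<noteq> 2" using False by presburger+
    then show ?thesis using q1 by simp
  qed
qed

end
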